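(* Let $X_t$, $t=0,1,\dots$, be a Markov chain on the finite state space $\Sigma=\{1,\dots,N\}$ with transition probability matrix $P=[p_{ij}]$ acting on row vectors by $x_{t+1}=x_tP$. Assume that $P$ is diagonalizable and has full rank. Consider a set of linearly independent right eigenvectors $u^{\alpha}$ of $P$, $Pu^{\alpha}=\lambda^{\alpha}u^{\alpha}$, indexed by $\alpha\in I$ where $I\subseteq\Sigma$. Define an equivalence relation on $\Sigma$ by $i\sim j$ if and only if $u^{\alpha}_i=u^{\alpha}_j$ for all $\alpha\in I$, and let $\widetilde{\Sigma}$ be the resulting partition of $\Sigma$ into equivalence classes. Then: (1) If $|\widetilde{\Sigma}|=|I|$, then $\widetilde{\Sigma}$ is a (strong) lumping of the Markov chain. (2) Conversely, if $\widetilde{\Sigma}$ is a partition of $\Sigma$ that is a (strong) lumping of the Markov chain, then there exist $|\widetilde{\Sigma}|$ linearly independent right eigenvectors of $P$ that are invariant under permutations of states within the lumps (i.e., each such eigenvector $y$ satisfies $y_i=y_j$ whenever $i,j$ lie in the same block of $\widetilde{\Sigma}$).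
   Context: A lumping (partition) of $\Sigma$ is $\widetilde{\Sigma}=\{L_1,\dots,L_M\}$ with nonempty, pairwise disjoint blocks $L_k$ whose union is $\Sigma$; it is encoded by the $N\times M$ matrix $\Pi=[\pi_{ik}]$ with $\pi_{ik}=1$ if $i\in L_k$ and $0$ otherwise. The chain is called strongly lumpable with respect to $\widetilde{\Sigma}$ (and $\widetilde{\Sigma}$ is then called a lumping of the chain) if the quotient process $\tilde{x}_t=x_t\Pi$ is a Markov process; equivalently, for all blocks $L_k,L_l$ the quantity $\sum_{j\in L_l}p_{ij}$ is the same for every $i\in L_k$. Right eigenvectors are $N\times 1$ column vectors $u$ with $Pu=\lambda u$. *)

theory Defs
  imports "HOL-Analysis.Analysis"
begin

text \<open>States are the elements of a finite type 'n (Sigma = UNIV, N = CARD('n)).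
  Transition matrices act on row vectors; right eigenvectors are column vectors.\<close>

definition stochastic_matrix :: "real^'n^'n \<Rightarrow> bool" where
  "stochastic_matrix P \<longleftrightarrow> (\<forall>i j. P $ i $ j \<ge> 0) \<and> (\<forall>i. (\<Sum>j\<in>UNIV. P $ i $ j) = 1)"

definition cmat :: "real^'n^'m \<Rightarrow> complex^'n^'m" where
  "cmat P = (\<chi> i j. complex_of_real (P $ i $ j))"

definition diagonalizable :: "real^'n^'n \<Rightarrow> bool" where
  "diagonalizable P \<longleftrightarrow> (\<exists>S D :: complex^'n^'n. invertible S \<and>
      (\<forall>i j. i \<noteq> j \<longrightarrow> D $ i $ j = 0) \<and> cmat P ** S = S ** D)"

definition right_eigenvector :: "real^'n^'n \<Rightarrow> complex \<Rightarrow> complex^'n \<Rightarrow> bool" where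
  "right_eigenvector P lam u \<longleftrightarrow> u \<noteq> 0 \<and> cmat P *v u = lam *s u"

definition lin_indep_family :: "'i set \<Rightarrow> ('i \<Rightarrow> complex^'n) \<Rightarrow> bool" where
  "lin_indep_family A u \<longleftrightarrow>
     (\<forall>c. (\<Sum>a\<in>A. c a *s u a) = 0 \<longrightarrow> (\<forall>a\<in>A. c a = 0))"

definition is_partition :: "'n set set \<Rightarrow> bool" where
  "is_partition Ls \<longleftrightarrow> (\<forall>L\<in>Ls. L \<noteq> {}) \<and>
     (\<forall>K\<in>Ls. \<forall>L\<in>Ls. K \<noteq> L \<longrightarrow> K \<inter> L = {}) \<and> \<Union>Ls = UNIV"

text \<open>Strong lumpability, in the equivalent row-sum form given in the context.\<close>
definition strongly_lumpable :: "real^'n^'n \<Rightarrow> 'n set set \<Rightarrow> bool" where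
  "strongly_lumpable P Ls \<longleftrightarrow> is_partition Ls \<and>
     (\<forall>K\<in>Ls. \<forall>L\<in>Ls. \<forall>i\<in>K. \<forall>j\<in>K. (\<Sum>k\<in>L. P $ i $ k) = (\<Sum>k\<in>L. P $ j $ k))"

definition eigen_classes :: "'n set \<Rightarrow> ('n \<Rightarrow> complex^'n) \<Rightarrow> 'n set set" where
  "eigen_classes I u = range (\<lambda>i. {j. \<forall>a\<in>I. u a $ j = u a $ i})"

end

theory Submission
  imports Defs
begin

definition ind :: "'n set \<Rightarrow> complex^'n" where
  "ind L = (\<chi> i. if i \<in> L then 1 else 0)"

definition cspace :: "'n set set \<Rightarrow> (complex^'n) set" where
  "cspace Ls = {x. \<forall>L\<in>Ls. \<forall>i\<in>L. \<forall>j\<in>L. x$i = x$j}"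

lemma cspace_subspace: "vec.subspace (cspace Ls)"
proof (rule vec.subspaceI)
  show "0 \<in> cspace Ls" unfolding cspace_def by simp
next
  fix x y assume x: "x \<in> cspace Ls" and y: "y \<in> cspace Ls"
  show "x + y \<in> cspace Ls" unfolding cspace_def mem_Collect_eq
  proof (intro ballI)
    fix L i j assume "L \<in> Ls" "i \<in> L" "j \<in> L"
    then have "x $ i = x $ j" "y $ i = y $ j" using x y unfolding cspace_def by blast+
    then show "(x + y) $ i = (x + y) $ j" by simp
  qed
next
  fix c x assume x: "x \<in> cspace Ls"
  show "c *s x \<in> cspace Ls" unfolding cspace_def mem_Collect_eq
  proof (intro ballI)
    fix L i j assume "L \<in> Ls" "i \<in> L" "j \<in> L"
    then have "x $ i = x $ j" using x unfolding cspace_def by blast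
    then show "(c *s x) $ i = (c *s x) $ j" by simp
  qed
qed

lemma finite_Ls: "finite (Ls :: ('n::finite) set set)"
  by (rule finite_subset[of _ "Pow UNIV"]) auto

lemma part_disj: "is_partition Ls \<Longrightarrow> \<forall>K\<in>Ls. \<forall>L\<in>Ls. K \<noteq> L \<longrightarrow> K \<inter> L = {}"
  unfolding is_partition_def by (elim conjE)

lemma part_unique: assumes "is_partition Ls" "K \<in> Ls" "L \<in> Ls" "i \<in> K" "i \<in> L" shows "K = L"
proof (rule ccontr)
  assume "K \<noteq> L"
  then have "K \<inter> L = {}" using part_disj[OF assms(1)] assms(2,3) by blast
  then show False using assms(4,5) by blast
qed

lemma part_ex: assumes "is_partition Ls" shows "\<exists>L\<in>Ls. i \<in> L"
proof -
  have "\<Union>Ls = UNIV" using assms unfolding is_partition_def by (elim conjE)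
  then have "i \<in> \<Union>Ls" by simp
  then show ?thesis by blast
qed

lemma part_ne: assumes "is_partition Ls" "L \<in> Ls" obtains i where "i \<in> L"
proof -
  have "L \<noteq> {}" using assms unfolding is_partition_def by (elim conjE) blast
  then show ?thesis using that by blast
qed

lemma ind_in: assumes p: "is_partition Ls" and L: "L \<in> Ls" shows "ind L \<in> cspace Ls"
  unfolding cspace_def mem_Collect_eq
proof (intro ballI)
  fix K i j assume K: "K \<in> Ls" and i: "i \<in> K" and j: "j \<in> K"
  have "i \<in> L \<longleftrightarrow> j \<in> L"
  proof
    assume "i \<in> L" then have "K = L" using part_unique[OF p K L i] by simp
    then show "j \<in> L" using j by simp
  next
    assume "j \<in> L" then have "K = L" using part_unique[OF p K L j] by simp
    then show "i \<in> L" using i by simp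
  qed
  then show "ind L $ i = ind L $ j" by (simp add: ind_def)
qed

lemma ind_inj: "is_partition Ls \<Longrightarrow> inj_on ind Ls"
proof (rule inj_onI)
  fix K L assume p: "is_partition Ls" and K: "K \<in> Ls" and L: "L \<in> Ls" and e: "ind K = ind L"
  obtain i where "i \<in> K" using part_ne[OF p K] by blast
  then have "ind K $ i = 1" by (simp add: ind_def)
  moreover have "ind K $ i = ind L $ i" using e by (rule arg_cong)
  ultimately have "i \<in> L" by (auto simp: ind_def split: if_splits)
  then show "K = L" using part_unique[OF p K L \<open>i \<in> K\<close>] by simp
qed

lemma sum_ind_comp:
  assumes p: "is_partition Ls" and L0: "L0 \<in> Ls" and i: "i \<in> L0"
  shows "(\<Sum>L\<in>Ls. c L *s ind L) $ i = c L0"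
proof -
  have "(\<Sum>L\<in>Ls. c L *s ind L) $ i = (\<Sum>L\<in>Ls. c L * (if i \<in> L then 1 else 0))"
    by (simp add: ind_def)
  also have "\<dots> = c L0 * (if i \<in> L0 then 1 else 0)"
  proof -
    have z: "(\<Sum>L\<in>Ls - {L0}. c L * (if i \<in> L then 1 else 0)) = 0"
    proof (rule sum.neutral, rule ballI)
      fix L assume L: "L \<in> Ls - {L0}"
      have "i \<notin> L"
      proof
        assume "i \<in> L" then have "L0 = L" using part_unique[OF p L0 _ i] L by blast
        then show False using L by blast
      qed
      then show "c L * (if i \<in> L then 1 else 0) = 0" by simp
    qed
    show ?thesis using sum.remove[OF finite_Ls L0, of "\<lambda>L. c L * (if i \<in> L then 1 else 0)"] z by simp
  qed
  finally show ?thesis using i by simp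
qed

lemma ind_indep: assumes p: "is_partition Ls" shows "vec.independent (ind ` Ls)"
proof -
  have H: "\<forall>c. (\<Sum>L\<in>Ls. c L *s ind L) = 0 \<longrightarrow> (\<forall>L\<in>Ls. c L = 0)"
  proof (intro allI impI ballI)
    fix c L assume z: "(\<Sum>L\<in>Ls. c L *s ind L) = 0" and L: "L \<in> Ls"
    obtain i where "i \<in> L" using part_ne[OF p L] by blast
    from sum_ind_comp[OF p L this, of c] z show "c L = 0" by simp
  qed
  have H2: "\<forall>c. (\<Sum>v\<in>ind ` Ls. c v *s v) = 0 \<longrightarrow> (\<forall>v\<in>ind ` Ls. c v = 0)"
  proof (intro allI impI ballI)
    fix c v assume z: "(\<Sum>v\<in>ind ` Ls. c v *s v) = 0" and v: "v \<in> ind ` Ls"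
    have "(\<Sum>v\<in>ind ` Ls. c v *s v) = (\<Sum>L\<in>Ls. c (ind L) *s ind L)"
      by (rule sum.reindex[OF ind_inj[OF p], unfolded comp_def])
    with z H have "\<forall>L\<in>Ls. c (ind L) = 0" by metis
    then show "c v = 0" using v by blast
  qed
  show ?thesis
    unfolding vec.independent_explicit
  proof (rule conjI)
    show "finite (ind ` Ls)" using finite_Ls[of Ls] by (rule finite_imageI)
  qed (rule H2)
qed

lemma cspace_repr:
  assumes p: "is_partition Ls" and x: "x \<in> cspace Ls"
  shows "x = (\<Sum>L\<in>Ls. x $ (SOME i. i \<in> L) *s ind L)"
proof (subst vec_eq_iff, rule allI)
  fix i
  obtain L0 where L0: "L0 \<in> Ls" "i \<in> L0" using part_ex[OF p] by blast
  have ne: "\<exists>i. i \<in> L0" using L0 by blast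
  have "(SOME i. i \<in> L0) \<in> L0" using someI_ex[OF ne] .
  then have 1: "x $ (SOME i. i \<in> L0) = x $ i" using x L0 unfolding cspace_def by blast
  have 2: "(\<Sum>L\<in>Ls. x $ (SOME i. i \<in> L) *s ind L) $ i = x $ (SOME i. i \<in> L0)"
    by (rule sum_ind_comp[OF p L0, where c="\<lambda>L. x $ (SOME i. i \<in> L)"])
  show "x $ i = (\<Sum>L\<in>Ls. x $ (SOME i. i \<in> L) *s ind L) $ i"
    by (simp only: 1 2)
qed

lemma cspace_span: "is_partition Ls \<Longrightarrow> cspace Ls \<subseteq> vec.span (ind ` Ls)"
proof
  fix x assume p: "is_partition Ls" and x: "x \<in> cspace Ls"
  have sp: "(\<Sum>L\<in>Ls. x $ (SOME i. i \<in> L) *s ind L) \<in> vec.span (ind ` Ls)"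
    by (intro vec.span_sum vec.span_scale vec.span_base) blast
  have e: "(\<Sum>L\<in>Ls. x $ (SOME i. i \<in> L) *s ind L) = x" using cspace_repr[OF p x] by (rule sym)
  show "x \<in> vec.span (ind ` Ls)" by (rule back_subst[of "\<lambda>y. y \<in> vec.span (ind ` Ls)", OF sp e])
qed

lemma cspace_dim: assumes p: "is_partition Ls" shows "vec.dim (cspace Ls) = card Ls"
proof -
  have "card (ind ` Ls) = vec.dim (cspace Ls)"
  proof (rule vec.basis_card_eq_dim)
    show "ind ` Ls \<subseteq> cspace Ls" using ind_in[OF p] by blast
    show "cspace Ls \<subseteq> vec.span (ind ` Ls)" by (rule cspace_span[OF p])
    show "vec.independent (ind ` Ls)" by (rule ind_indep[OF p])
  qed
  then show ?thesis using card_image[OF ind_inj[OF p]] by linarith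
qed

lemma inv_eig_parts:
  fixes A :: "complex^'n^'n" and V :: "(complex^'n) set"
  assumes V: "vec.subspace V" and inv: "\<And>x. x \<in> V \<Longrightarrow> A *v x \<in> V" and fin: "finite Lam"
  shows "(\<forall>l\<in>Lam. A *v w l = l *s w l) \<Longrightarrow> (\<Sum>l\<in>Lam. w l) \<in> V \<Longrightarrow> \<forall>l\<in>Lam. w l \<in> V"
  using fin
proof (induction Lam arbitrary: w rule: finite_induct)
  case empty
  then show ?case by simp
next
  case (insert m Lam)
  have ev: "\<forall>l\<in>Lam. A *v w l = l *s w l" and evm: "A *v w m = m *s w m" using insert.prems(1) by auto
  have tot: "w m + (\<Sum>l\<in>Lam. w l) \<in> V" using insert.prems(2) insert.hyps by simp
  define w' where "w' l = (l - m) *s w l" for l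
  have d: "A *v (w m + (\<Sum>l\<in>Lam. w l)) - m *s (w m + (\<Sum>l\<in>Lam. w l)) = (\<Sum>l\<in>Lam. w' l)"
  proof -
    have "A *v (w m + (\<Sum>l\<in>Lam. w l)) = m *s w m + (\<Sum>l\<in>Lam. l *s w l)"
      using ev evm by (simp add: vec.add vec.sum)
    moreover have "m *s (w m + (\<Sum>l\<in>Lam. w l)) = m *s w m + (\<Sum>l\<in>Lam. m *s w l)"
      by (simp add: vec.scale_right_distrib vec.scale_sum_right)
    moreover have "(\<Sum>l\<in>Lam. w' l) = (\<Sum>l\<in>Lam. l *s w l) - (\<Sum>l\<in>Lam. m *s w l)"
      unfolding w'_def vec.scale_left_diff_distrib by (simp add: sum_subtractf)
    ultimately show ?thesis by simp
  qed
  have "A *v (w m + (\<Sum>l\<in>Lam. w l)) - m *s (w m + (\<Sum>l\<in>Lam. w l)) \<in> V"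
    by (rule vec.subspace_diff[OF V inv[OF tot] vec.subspace_scale[OF V tot]])
  then have s': "(\<Sum>l\<in>Lam. w' l) \<in> V" unfolding d .
  have ev': "\<forall>l\<in>Lam. A *v w' l = l *s w' l"
  proof
    fix l assume l: "l \<in> Lam"
    have "A *v w' l = (l - m) *s (A *v w l)" unfolding w'_def by (rule vec.scale)
    also have "\<dots> = (l - m) *s (l *s w l)" using ev l by simp
    also have "\<dots> = l *s w' l" unfolding w'_def by (rule vec.scale_left_commute)
    finally show "A *v w' l = l *s w' l" .
  qed
  have IH: "\<forall>l\<in>Lam. w' l \<in> V" by (rule insert.IH[OF ev' s'])
  have rest: "\<forall>l\<in>Lam. w l \<in> V"
  proof
    fix l assume l: "l \<in> Lam"
    then have "l \<noteq> m" using insert.hyps by blast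
    then have nz: "l - m \<noteq> 0" by simp
    have c1: "inverse (l - m) *s w' l = (inverse (l - m) * (l - m)) *s w l"
      unfolding w'_def by (rule vec.scale_scale)
    have c2: "inverse (l - m) * (l - m) = 1" using nz by (rule left_inverse)
    have e: "inverse (l - m) *s w' l = w l" unfolding c1 c2 by (rule vec.scale_one)
    have w'V: "w' l \<in> V" using IH l by (rule bspec)
    have "inverse (l - m) *s w' l \<in> V" by (rule vec.subspace_scale[OF V w'V])
    then show "w l \<in> V" unfolding e .
  qed
  have "(\<Sum>l\<in>Lam. w l) \<in> V" by (rule vec.subspace_sum[OF V]) (use rest in blast)
  then have "(w m + (\<Sum>l\<in>Lam. w l)) - (\<Sum>l\<in>Lam. w l) \<in> V" by (rule vec.subspace_diff[OF V tot])
  then have "w m \<in> V" by simp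
  then show ?case using rest by blast
qed

lemma diag_col:
  fixes S D :: "complex^'n^'n"
  assumes D: "\<forall>i j. i \<noteq> j \<longrightarrow> D$i$j = 0"
  shows "column j (S ** D) = D$j$j *s column j S"
proof -
  have "(S ** D) $ i $ j = S $ i $ j * D $ j $ j" for i
  proof -
    have "(S ** D) $ i $ j = (\<Sum>k\<in>UNIV. S $ i $ k * D $ k $ j)"
      by (simp add: matrix_matrix_mult_def)
    also have "\<dots> = S $ i $ j * D $ j $ j + (\<Sum>k\<in>UNIV - {j}. S $ i $ k * D $ k $ j)"
      by (rule sum.remove) auto
    also have "(\<Sum>k\<in>UNIV - {j}. S $ i $ k * D $ k $ j) = 0"
      by (rule sum.neutral) (use D in auto)
    finally show ?thesis by simp
  qed
  then show ?thesis by (simp add: column_def vec_eq_iff mult.commute)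
qed

lemma col_mult: "column j ((A::complex^'n^'n) ** B) = A *v column j B"
  by (simp add: column_def matrix_vector_mult_def matrix_matrix_mult_def vec_eq_iff)

lemma diag_basis:
  fixes P :: "real^'n^'n"
  assumes "diagonalizable P"
  shows "\<exists>(s :: 'n \<Rightarrow> complex^'n) (d :: 'n \<Rightarrow> complex).
    (\<forall>j. cmat P *v s j = d j *s s j) \<and> (\<forall>v. \<exists>c. v = (\<Sum>j\<in>UNIV. c j *s s j))"
proof -
  obtain S D :: "complex^'n^'n" where S: "invertible S" and D: "\<forall>i j. i \<noteq> j \<longrightarrow> D$i$j = 0"
    and PS: "cmat P ** S = S ** D"
    using assms unfolding diagonalizable_def by blast
  define s where "s j = column j S" for j
  define d where "d j = D$j$j" for j
  have ev: "cmat P *v s j = d j *s s j" for j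
  proof -
    have "cmat P *v s j = column j (cmat P ** S)" unfolding s_def by (rule col_mult[symmetric])
    also have "\<dots> = column j (S ** D)" using PS by simp
    also have "\<dots> = d j *s s j" unfolding s_def d_def by (rule diag_col[OF D])
    finally show ?thesis .
  qed
  obtain S' where S': "S ** S' = mat 1" using S unfolding invertible_def by blast
  have sp: "\<exists>c. v = (\<Sum>j\<in>UNIV. c j *s s j)" for v
  proof -
    have "v = (S ** S') *v v" using S' by simp
    also have "\<dots> = S *v (S' *v v)" by (simp add: matrix_vector_mul_assoc)
    also have "\<dots> = (\<Sum>j\<in>UNIV. (S' *v v) $ j *s s j)" unfolding s_def by (rule matrix_mult_sum)
    finally show ?thesis by (rule exI[where x="\<lambda>j. (S' *v v) $ j"])
  qed
  show ?thesis by (rule exI[of _ s], rule exI[of _ d]) (use ev sp in blast)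
qed

lemma eig_span:
  fixes P :: "real^'n^'n" and V :: "(complex^'n) set"
  assumes diag: "diagonalizable P" and V: "vec.subspace V" and inv: "\<And>x. x \<in> V \<Longrightarrow> cmat P *v x \<in> V"
  shows "V \<subseteq> vec.span {w \<in> V. \<exists>l. cmat P *v w = l *s w}"
proof
  fix v assume v: "v \<in> V"
  obtain s :: "'n \<Rightarrow> complex^'n" and d :: "'n \<Rightarrow> complex" where ev0: "\<forall>j. cmat P *v s j = d j *s s j" and sp: "\<forall>v. \<exists>c. v = (\<Sum>j\<in>UNIV. c j *s s j)"
    using diag_basis[OF diag] by auto
  have ev: "cmat P *v s j = d j *s s j" for j using ev0 by (rule spec)
  obtain c where c: "v = (\<Sum>j\<in>UNIV. c j *s s j)" using spec[OF sp, of v] by blast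
  define w where "w l = (\<Sum>j\<in>{j. d j = l}. c j *s s j)" for l
  have vw: "v = (\<Sum>l\<in>d ` UNIV. w l)"
    unfolding c w_def using sum.image_gen[of UNIV "\<lambda>j. c j *s s j" d] by simp
  have wev: "\<forall>l\<in>d ` UNIV. cmat P *v w l = l *s w l"
  proof
    fix l
    have "cmat P *v w l = (\<Sum>j\<in>{j. d j = l}. c j *s (cmat P *v s j))"
      unfolding w_def by (simp add: vec.sum vec.scale)
    also have "\<dots> = (\<Sum>j\<in>{j. d j = l}. l *s (c j *s s j))"
      by (rule sum.cong) (simp_all add: ev vec.scale_left_commute)
    also have "\<dots> = l *s w l" unfolding w_def by (simp add: vec.scale_sum_right)
    finally show "cmat P *v w l = l *s w l" .
  qed
  have wV: "\<forall>l\<in>d ` UNIV. w l \<in> V"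
    by (rule inv_eig_parts[OF V inv _ wev]) (use v vw in simp_all)
  have "(\<Sum>l\<in>d ` UNIV. w l) \<in> vec.span {w \<in> V. \<exists>l. cmat P *v w = l *s w}"
  proof (rule vec.span_sum)
    fix l assume l: "l \<in> d ` UNIV"
    show "w l \<in> vec.span {w \<in> V. \<exists>l. cmat P *v w = l *s w}"
      by (rule vec.span_base) (use wV wev l in blast)
  qed
  then show "v \<in> vec.span {w \<in> V. \<exists>l. cmat P *v w = l *s w}" using vw by simp
qed

lemma Aind: "(cmat P *v ind L) $ i = complex_of_real (\<Sum>k\<in>L. P$i$k)"
proof -
  have "(cmat P *v ind L) $ i = (\<Sum>k\<in>UNIV. (if k \<in> L then complex_of_real (P$i$k) else 0))"
    unfolding matrix_vector_mult_def cmat_def ind_def by (simp; rule sum.cong; auto)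
  also have "\<dots> = (\<Sum>k\<in>UNIV \<inter> L. complex_of_real (P$i$k))"
    by (rule sum.inter_restrict[symmetric]) simp
  finally show ?thesis by simp
qed

lemma classes_partition: "is_partition (eigen_classes I u)"
  unfolding is_partition_def
proof (intro conjI)
  show "\<forall>L\<in>eigen_classes I u. L \<noteq> {}" unfolding eigen_classes_def by blast
  show "\<Union>(eigen_classes I u) = UNIV" unfolding eigen_classes_def by blast
  show "\<forall>K\<in>eigen_classes I u. \<forall>L\<in>eigen_classes I u. K \<noteq> L \<longrightarrow> K \<inter> L = {}"
  proof (intro ballI impI)
    fix K L assume K: "K \<in> eigen_classes I u" and L: "L \<in> eigen_classes I u" and ne: "K \<noteq> L"
    obtain r1 where r1: "K = {j. \<forall>a\<in>I. u a $ j = u a $ r1}" using K unfolding eigen_classes_def by blast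
    obtain r2 where r2: "L = {j. \<forall>a\<in>I. u a $ j = u a $ r2}" using L unfolding eigen_classes_def by blast
    show "K \<inter> L = {}"
    proof (rule ccontr)
      assume "K \<inter> L \<noteq> {}"
      then obtain x where "x \<in> K" "x \<in> L" by blast
      then have x1: "\<forall>a\<in>I. u a $ x = u a $ r1" and x2: "\<forall>a\<in>I. u a $ x = u a $ r2" using r1 r2 by auto
      have "K = L" unfolding r1 r2
      proof (intro Collect_cong iffI ballI)
        fix j a assume "\<forall>a\<in>I. u a $ j = u a $ r1" "a \<in> I"
        then show "u a $ j = u a $ r2" using x1 x2 by metis
      next
        fix j a assume "\<forall>a\<in>I. u a $ j = u a $ r2" "a \<in> I"
        then show "u a $ j = u a $ r1" using x1 x2 by metis
      qed
      then show False using ne by simp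
    qed
  qed
qed

lemma u_in_classes: assumes "a \<in> I" shows "u a \<in> cspace (eigen_classes I u)"
  unfolding cspace_def mem_Collect_eq
proof (intro ballI)
  fix L i j assume L: "L \<in> eigen_classes I u" and i: "i \<in> L" and j: "j \<in> L"
  obtain r where r: "L = {j. \<forall>a\<in>I. u a $ j = u a $ r}" using L unfolding eigen_classes_def by blast
  have "u a $ i = u a $ r" "u a $ j = u a $ r" using i j assms unfolding r by auto
  then show "u a $ i = u a $ j" by simp
qed

lemma indep_inj:
  assumes indep: "lin_indep_family I u" and fin: "finite I"
  shows "inj_on u I"
proof (rule inj_onI, rule ccontr)
  fix a b assume a: "a \<in> I" and b: "b \<in> I" and e: "u a = u b" and ne: "a \<noteq> b"
  define c where "c x = (if x = a then 1 else if x = b then -1 else (0::complex))" for x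
  have "(\<Sum>x\<in>I. c x *s u x) = (\<Sum>x\<in>{a,b}. c x *s u x)"
    by (rule sum.mono_neutral_right) (use fin a b in \<open>auto simp: c_def\<close>)
  also have "\<dots> = 0" using ne e by (simp add: c_def)
  finally have "c a = 0" using indep a unfolding lin_indep_family_def by blast
  then show False by (simp add: c_def)
qed

lemma indep_image:
  assumes indep: "lin_indep_family I u" and fin: "finite I"
  shows "vec.independent (u ` I)"
proof -
  have inj: "inj_on u I" by (rule indep_inj[OF indep fin])
  have H: "\<forall>c. (\<Sum>v\<in>u ` I. c v *s v) = 0 \<longrightarrow> (\<forall>v\<in>u ` I. c v = 0)"
  proof (intro allI impI ballI)
    fix c v assume z: "(\<Sum>v\<in>u ` I. c v *s v) = 0" and v: "v \<in> u ` I"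
    have "(\<Sum>v\<in>u ` I. c v *s v) = (\<Sum>a\<in>I. c (u a) *s u a)"
      by (rule sum.reindex[OF inj, unfolded comp_def])
    with z have "(\<Sum>a\<in>I. c (u a) *s u a) = 0" by simp
    moreover have "(\<Sum>a\<in>I. c (u a) *s u a) = 0 \<longrightarrow> (\<forall>a\<in>I. c (u a) = 0)"
      using indep unfolding lin_indep_family_def by (rule spec)
    ultimately have "\<forall>a\<in>I. c (u a) = 0" by (rule rev_mp)
    then show "c v = 0" using v by blast
  qed
  show ?thesis unfolding vec.independent_explicit
  proof (rule conjI)
    show "finite (u ` I)" using fin by (rule finite_imageI)
  qed (rule H)
qed

lemma part1:
  fixes P :: "real^'n^'n" and I :: "'n set" and u :: "'n \<Rightarrow> complex^'n" and lam :: "'n \<Rightarrow> complex"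
  assumes eig: "\<forall>a\<in>I. right_eigenvector P (lam a) (u a)"
    and indep: "lin_indep_family I u"
    and cardeq: "card (eigen_classes I u) = card I"
  shows "strongly_lumpable P (eigen_classes I u)"
proof -
  define C where "C = eigen_classes I u"
  have p: "is_partition C" unfolding C_def by (rule classes_partition)
  have fin: "finite I" by simp
  have inj: "inj_on u I" by (rule indep_inj[OF indep fin])
  have ind: "vec.independent (u ` I)" by (rule indep_image[OF indep fin])
  have sub: "u ` I \<subseteq> cspace C" unfolding C_def using u_in_classes by blast
  have "vec.dim (cspace C) = card (u ` I)"
    using cspace_dim[OF p] card_image[OF inj] cardeq unfolding C_def by simp
  then have sp1: "cspace C \<subseteq> vec.span (u ` I)"
    using vec.card_ge_dim_independent[OF sub ind] by simp
  have sp2: "vec.span (u ` I) \<subseteq> cspace C"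
    by (rule vec.span_minimal[OF sub cspace_subspace])
  have invs: "cmat P *v y \<in> vec.span (u ` I)" if y: "y \<in> vec.span (u ` I)" for y
  proof -
    have "y \<in> range (\<lambda>c. \<Sum>v\<in>u ` I. c v *s v)" using y vec.span_finite[of "u ` I"] fin by simp
    then obtain c where c: "y = (\<Sum>v\<in>u ` I. c v *s v)" by blast
    have "cmat P *v y = (\<Sum>v\<in>u ` I. c v *s (cmat P *v v))" unfolding c by (simp add: vec.sum vec.scale)
    also have "\<dots> \<in> vec.span (u ` I)"
    proof (rule vec.span_sum)
      fix v assume v: "v \<in> u ` I"
      then obtain a where a: "a \<in> I" and va: "v = u a" by blast
      have "cmat P *v v = lam a *s v" using eig a va unfolding right_eigenvector_def by simp
      moreover have "lam a *s v \<in> vec.span (u ` I)" by (rule vec.span_scale, rule vec.span_base, rule v)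
      ultimately have "cmat P *v v \<in> vec.span (u ` I)" by simp
      then show "c v *s (cmat P *v v) \<in> vec.span (u ` I)" by (rule vec.span_scale)
    qed
    finally show ?thesis .
  qed
  have "\<forall>K\<in>C. \<forall>L\<in>C. \<forall>i\<in>K. \<forall>j\<in>K. (\<Sum>k\<in>L. P $ i $ k) = (\<Sum>k\<in>L. P $ j $ k)"
  proof (intro ballI)
    fix K L i j assume K: "K \<in> C" and L: "L \<in> C" and i: "i \<in> K" and j: "j \<in> K"
    have "ind L \<in> vec.span (u ` I)" using sp1 ind_in[OF p L] by blast
    then have "cmat P *v ind L \<in> cspace C" using invs sp2 by blast
    then have "(cmat P *v ind L) $ i = (cmat P *v ind L) $ j" using K i j unfolding cspace_def by blast
    then show "(\<Sum>k\<in>L. P $ i $ k) = (\<Sum>k\<in>L. P $ j $ k)" unfolding Aind of_real_eq_iff .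
  qed
  then show ?thesis using p unfolding strongly_lumpable_def C_def by blast
qed

lemma part2:
  fixes P :: "real^'n^'n" and Ls :: "'n set set"
  assumes diag: "diagonalizable P" and p: "is_partition Ls" and lump: "strongly_lumpable P Ls"
  shows "\<exists>v :: 'n set \<Rightarrow> complex^'n. \<exists>mu :: 'n set \<Rightarrow> complex.
             lin_indep_family Ls v \<and>
             (\<forall>L\<in>Ls. right_eigenvector P (mu L) (v L)) \<and>
             (\<forall>L\<in>Ls. \<forall>K\<in>Ls. \<forall>i\<in>K. \<forall>j\<in>K. v L $ i = v L $ j)"
proof -
  define V where "V = cspace Ls"
  define A where "A = cmat P"
  have Vs: "vec.subspace V" unfolding V_def by (rule cspace_subspace)
  have indA: "A *v ind L \<in> V" if L: "L \<in> Ls" for L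
    unfolding V_def cspace_def mem_Collect_eq
  proof (intro ballI)
    fix K i j assume "K \<in> Ls" "i \<in> K" "j \<in> K"
    then have "(\<Sum>k\<in>L. P $ i $ k) = (\<Sum>k\<in>L. P $ j $ k)" using lump L unfolding strongly_lumpable_def by blast
    then show "(A *v ind L) $ i = (A *v ind L) $ j" unfolding A_def Aind by simp
  qed
  have inv: "A *v x \<in> V" if x: "x \<in> V" for x
  proof -
    have e: "x = (\<Sum>L\<in>Ls. x $ (SOME i. i \<in> L) *s ind L)" using cspace_repr[OF p] x unfolding V_def by blast
    have "A *v x = A *v (\<Sum>L\<in>Ls. x $ (SOME i. i \<in> L) *s ind L)" by (rule arg_cong[OF e])
    also have "\<dots> = (\<Sum>L\<in>Ls. x $ (SOME i. i \<in> L) *s (A *v ind L))"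
      by (simp only: vec.sum vec.scale)
    also have "\<dots> \<in> V"
      by (rule vec.subspace_sum[OF Vs], rule vec.subspace_scale[OF Vs], rule indA)
    finally show ?thesis .
  qed
  define W where "W = {w \<in> V. \<exists>l. A *v w = l *s w}"
  have VW: "V \<subseteq> vec.span W" unfolding W_def A_def
    by (rule eig_span[OF diag Vs], rule inv[unfolded A_def])
  obtain B where BW: "B \<subseteq> W" and indB: "vec.independent B" and WB: "W \<subseteq> vec.span B"
    by (rule vec.maximal_independent_subset)
  have "vec.span W \<subseteq> vec.span B" by (rule vec.span_minimal[OF WB vec.subspace_span])
  then have VB: "V \<subseteq> vec.span B" using VW by blast
  have BV: "B \<subseteq> V" using BW unfolding W_def by blast
  have "card B = vec.dim V" by (rule vec.basis_card_eq_dim[OF BV VB indB])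
  then have cardB: "card Ls = card B" using cspace_dim[OF p] unfolding V_def by simp
  have finB: "finite B" using indB by (rule vec.finiteI_independent)
  obtain f where f: "bij_betw f Ls B" using finite_same_card_bij[OF finite_Ls finB cardB] by blast
  define mu where "mu L = (SOME l. A *v f L = l *s f L)" for L
  have fB: "f L \<in> B" if "L \<in> Ls" for L using f that unfolding bij_betw_def by blast
  have ev: "right_eigenvector P (mu L) (f L)" if L: "L \<in> Ls" for L
  proof -
    have "f L \<in> W" using fB[OF L] BW by blast
    then have ex: "\<exists>l. A *v f L = l *s f L" unfolding W_def by blast
    have "A *v f L = mu L *s f L" unfolding mu_def by (rule someI_ex[OF ex])
    moreover have "f L \<noteq> 0"
    proof
      assume "f L = 0"
      then have "0 \<in> B" using fB[OF L] by simp
      then show False using indB vec.dependent_zero by blast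
    qed
    ultimately show ?thesis unfolding right_eigenvector_def A_def by blast
  qed
  have blk: "\<forall>L\<in>Ls. \<forall>K\<in>Ls. \<forall>i\<in>K. \<forall>j\<in>K. f L $ i = f L $ j"
  proof (intro ballI)
    fix L K i j assume L: "L \<in> Ls" and K: "K \<in> Ls" and i: "i \<in> K" and j: "j \<in> K"
    have "f L \<in> V" using fB[OF L] BV by blast
    then show "f L $ i = f L $ j" using K i j unfolding V_def cspace_def by blast
  qed
  have li: "lin_indep_family Ls f"
    unfolding lin_indep_family_def
  proof (intro allI impI ballI)
    fix c L assume z: "(\<Sum>L\<in>Ls. c L *s f L) = 0" and L: "L \<in> Ls"
    have inj: "inj_on f Ls" using f unfolding bij_betw_def by blast
    have im: "f ` Ls = B" using f unfolding bij_betw_def by blast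
    define c' where "c' b = c (inv_into Ls f b)" for b
    have "(\<Sum>b\<in>B. c' b *s b) = (\<Sum>L\<in>Ls. c' (f L) *s f L)"
      unfolding im[symmetric] by (rule sum.reindex[OF inj, unfolded comp_def])
    also have "\<dots> = (\<Sum>L\<in>Ls. c L *s f L)"
      by (rule sum.cong) (simp_all add: c'_def inv_into_f_f[OF inj])
    finally have z': "(\<Sum>b\<in>B. c' b *s b) = 0" using z by simp
    have H: "\<forall>c. (\<Sum>b\<in>B. c b *s b) = 0 \<longrightarrow> (\<forall>b\<in>B. c b = 0)"
      using indB unfolding vec.independent_explicit by (elim conjE)
    have "(\<Sum>b\<in>B. c' b *s b) = 0 \<longrightarrow> (\<forall>b\<in>B. c' b = 0)" using spec[OF H, of c'] .
    then have "\<forall>b\<in>B. c' b = 0" using z' by (rule mp)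
    then have "c' (f L) = 0" using fB[OF L] by blast
    then show "c L = 0" by (simp add: c'_def inv_into_f_f[OF inj L])
  qed
  show ?thesis
    by (rule exI[of _ f], rule exI[of _ mu]) (use li ev blk in blast)
qed

theorem theorem2:
  fixes P :: "real^'n^'n"
    and I :: "'n set"
    and u :: "'n \<Rightarrow> complex^'n"
    and lam :: "'n \<Rightarrow> complex"
  assumes stoch: "stochastic_matrix P"
    and diag: "diagonalizable P"
    and full_rank: "invertible P"
    and eig: "\<forall>a\<in>I. right_eigenvector P (lam a) (u a)"
    and indep: "lin_indep_family I u"
  shows "(card (eigen_classes I u) = card I \<longrightarrow> strongly_lumpable P (eigen_classes I u))
    \<and> (\<forall>Ls. is_partition Ls \<and> strongly_lumpable P Ls \<longrightarrow>
          (\<exists>v :: 'n set \<Rightarrow> complex^'n. \<exists>mu :: 'n set \<Rightarrow> complex.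
             lin_indep_family Ls v \<and>
             (\<forall>L\<in>Ls. right_eigenvector P (mu L) (v L)) \<and>
             (\<forall>L\<in>Ls. \<forall>K\<in>Ls. \<forall>i\<in>K. \<forall>j\<in>K. v L $ i = v L $ j)))"
proof (rule conjI)
  show "card (eigen_classes I u) = card I \<longrightarrow> strongly_lumpable P (eigen_classes I u)"
    by (rule impI, rule part1[OF eig indep])
  show "\<forall>Ls. is_partition Ls \<and> strongly_lumpable P Ls \<longrightarrow>
          (\<exists>v :: 'n set \<Rightarrow> complex^'n. \<exists>mu :: 'n set \<Rightarrow> complex.
             lin_indep_family Ls v \<and>
             (\<forall>L\<in>Ls. right_eigenvector P (mu L) (v L)) \<and>
             (\<forall>L\<in>Ls. \<forall>K\<in>Ls. \<forall>i\<in>K. \<forall>j\<in>K. v L $ i = v L $ j))"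
  proof (intro allI impI)
    fix Ls assume h: "is_partition Ls \<and> strongly_lumpable P Ls"
    then show "\<exists>v :: 'n set \<Rightarrow> complex^'n. \<exists>mu :: 'n set \<Rightarrow> complex.
             lin_indep_family Ls v \<and>
             (\<forall>L\<in>Ls. right_eigenvector P (mu L) (v L)) \<and>
             (\<forall>L\<in>Ls. \<forall>K\<in>Ls. \<forall>i\<in>K. \<forall>j\<in>K. v L $ i = v L $ j)"
      by (elim conjE) (rule part2[OF diag])
  qed
qed

end
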